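(* Let $\sigma>0$ and $m\in\mathbb{N}$ with $m\ge\sigma$. Let $Q_m$ be the $L_2(0,1)$-orthogonal projection onto piecewise constant functions on the partition $\Delta_i=[(i-1)/m,i/m)$, $[Q_mx](s)=m\int_{\Delta_i}x(t)\,dt$ for $s\in\Delta_i$, and let $Q_m^\sigma$ be the $\langle\cdot,\cdot\rangle_\sigma$-orthogonal projection onto $\{e^{\sigma\cdot}p: p \text{ piecewise constant on this partition}\}$, i.e. $[Q_m^\sigma x](s)=e^{\sigma s}m\int_{\Delta_i}e^{-\sigma t}x(t)\,dt$ for $s\in\Delta_i$. Then $$\|Q_m-Q_m^\sigma\|_{\sigma\to\sigma}\le\frac{2\sigma}{m}\qquad\text{and}\qquad\|Q_m\|_{\sigma\to\sigma}\le1+\frac{2\sigma}{m}.$$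
   Context: $\langle x,y\rangle_\sigma=\int_0^1e^{-2\sigma t}x(t)y(t)\,dt$, $\|x\|_\sigma=\langle x,x\rangle_\sigma^{1/2}$, and for a linear operator $A$ on $L_2(0,1)$, $\|A\|_{\sigma\to\sigma}=\sup_{x\ne0}\|Ax\|_\sigma/\|x\|_\sigma$. *)

theory Defs
  imports "HOL-Analysis.Analysis"
begin

text \<open>Elements of L2(0,1), represented by Borel measurable real functions
  (values outside [0,1] are irrelevant) that are square integrable on [0,1].\<close>
definition L2_01 :: "(real \<Rightarrow> real) \<Rightarrow> bool" where
  "L2_01 x \<longleftrightarrow> x \<in> borel_measurable lborel \<and>
                set_integrable lborel {0..1} (\<lambda>t. (x t)\<^sup>2)"

definition inner_sigma :: "real \<Rightarrow> (real \<Rightarrow> real) \<Rightarrow> (real \<Rightarrow> real) \<Rightarrow> real" where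
  "inner_sigma \<sigma> x y = (LINT t:{0..1}|lborel. exp (-2*\<sigma>*t) * x t * y t)"

definition norm_sigma :: "real \<Rightarrow> (real \<Rightarrow> real) \<Rightarrow> real" where
  "norm_sigma \<sigma> x = sqrt (inner_sigma \<sigma> x x)"

definition opnorm_sigma :: "real \<Rightarrow> ((real \<Rightarrow> real) \<Rightarrow> (real \<Rightarrow> real)) \<Rightarrow> real" where
  "opnorm_sigma \<sigma> A =
     Sup {norm_sigma \<sigma> (A x) / norm_sigma \<sigma> x | x. L2_01 x \<and> norm_sigma \<sigma> x \<noteq> 0}"

text \<open>Cell \<Delta>_i = [(i-1)/m, i/m), here 0-based: cell k = [k/m, (k+1)/m), k = floor(m s).\<close>
definition cell :: "nat \<Rightarrow> real \<Rightarrow> real set" where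
  "cell m s = (let k = real_of_int (floor (real m * s)) in {k / real m ..< (k + 1) / real m})"

definition Qm :: "nat \<Rightarrow> (real \<Rightarrow> real) \<Rightarrow> (real \<Rightarrow> real)" where
  "Qm m x = (\<lambda>s. if s \<in> {0..<1} then real m * (LINT t:cell m s|lborel. x t) else 0)"

definition Qm_sigma :: "real \<Rightarrow> nat \<Rightarrow> (real \<Rightarrow> real) \<Rightarrow> (real \<Rightarrow> real)" where
  "Qm_sigma \<sigma> m x = (\<lambda>s. if s \<in> {0..<1}
       then exp (\<sigma> * s) * real m * (LINT t:cell m s|lborel. (exp (- \<sigma> * t) * x t)) else 0)"

end

theory Submission
  imports Defs
begin

lemma sint_const: "set_integrable lborel {a..<b::real} (\<lambda>_. c::real)"
  unfolding set_integrable_def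
proof (rule integrable_indicator)
  show "emeasure lborel {a..<b} < \<infinity>"
  proof (cases "a \<le> b")
    case False then have "{a..<b} = {}" by auto
    then show ?thesis by simp
  qed (simp add: ennreal_less_top)
qed simp

lemma abs_le_sq1: "\<bar>v::real\<bar> \<le> \<bar>1 + v^2\<bar>"
proof -
  have "0 \<le> (\<bar>v\<bar> - 1)^2" by simp
  then have "2*\<bar>v\<bar> \<le> 1 + v^2" by (simp add: power2_eq_square algebra_simps)
  moreover have "0 \<le> 1 + v^2" by simp
  ultimately show ?thesis by simp
qed

lemma sint_abs_of_sq:
  fixes y :: "real \<Rightarrow> real"
  assumes "y \<in> borel_measurable lborel" "set_integrable lborel {a..<b} (\<lambda>t. (y t)^2)"
  shows "set_integrable lborel {a..<b} y"
proof -
  have "set_integrable lborel {a..<b} (\<lambda>t. 1 + (y t)^2)"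
    using sint_const assms(2) by (rule set_integral_add)
  then show ?thesis
    apply (rule set_integrable_bound)
    using assms(1) apply (simp add: set_borel_measurable_def)
    apply (intro AE_I2 impI)
    using abs_le_sq1 by simp
qed

lemma mean_sq:
  fixes y :: "real \<Rightarrow> real"
  assumes "a \<le> b" "y \<in> borel_measurable lborel" "set_integrable lborel {a..<b} (\<lambda>t. (y t)^2)"
  shows "(LINT t:{a..<b}|lborel. \<bar>y t\<bar>)^2 \<le> (b-a) * (LINT t:{a..<b}|lborel. (y t)^2)"
proof (cases "a = b")
  case True then show ?thesis by (simp add: set_lebesgue_integral_def)
next
  case False
  with assms have h: "b - a > 0" by simp
  define I where "I = (LINT t:{a..<b}|lborel. \<bar>y t\<bar>)"
  define J where "J = (LINT t:{a..<b}|lborel. (y t)^2)"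
  define c where "c = I / (b - a)"
  have iy: "set_integrable lborel {a..<b} (\<lambda>t. \<bar>y t\<bar>)"
    using sint_abs_of_sq[OF assms(2,3)] by (rule set_integrable_abs)
  have e: "(\<lambda>t. (\<bar>y t\<bar> - c)^2) = (\<lambda>t. ((y t)^2 - 2*c*\<bar>y t\<bar>) + c^2)"
    by (auto simp: power2_eq_square algebra_simps)
  have i1: "set_integrable lborel {a..<b} (\<lambda>t. (y t)^2 - 2*c*\<bar>y t\<bar>)"
    using assms(3) iy by auto
  have "0 \<le> (LINT t:{a..<b}|lborel. (\<bar>y t\<bar> - c)^2)"
    unfolding set_lebesgue_integral_def by (rule Bochner_Integration.integral_nonneg) (simp add: indicator_def)
  also have "\<dots> = J - 2*c*I + c^2*(b-a)"
    unfolding e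
    apply (subst set_integral_add(2)[OF i1 sint_const])
    apply (subst set_integral_diff(2)[OF assms(3)])
    using iy apply auto[1]
    using h by (simp add: set_integral_const I_def J_def)
  finally have 0: "0 \<le> J - 2*c*I + c^2*(b-a)" .
  have sq: "(I/hh)^2*hh = I^2/hh" if "hh \<noteq> 0" for hh :: real using that by (simp add: power2_eq_square field_simps)
  have e1: "c^2*(b-a) = I^2/(b-a)" using h sq[of "b-a"] by (simp add: c_def)
  have e2: "2*c*I = 2*(I^2/(b-a))" by (simp add: c_def power2_eq_square)
  have "I^2/(b-a) \<le> J" using 0 e1 e2 by linarith
  then have "I^2 \<le> J*(b-a)" using h by (simp add: pos_divide_le_eq)
  then show ?thesis by (simp add: I_def J_def mult.commute)
qed

lemma cs_cell:
  fixes y k :: "real \<Rightarrow> real"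
  assumes "a \<le> b" "y \<in> borel_measurable lborel" "k \<in> borel_measurable lborel"
    "set_integrable lborel {a..<b} (\<lambda>t. (y t)^2)" "\<And>t. t \<in> {a..<b} \<Longrightarrow> \<bar>k t\<bar> \<le> K"
  shows "(LINT t:{a..<b}|lborel. k t * y t)^2 \<le> K^2 * (b-a) * (LINT t:{a..<b}|lborel. (y t)^2)"
proof (cases "a = b")
  case True then show ?thesis by (simp add: set_lebesgue_integral_def)
next
  case False
  then have "a < b" using assms by simp
  then have K0: "0 \<le> K" using assms(5)[of a] by auto
  have iy: "set_integrable lborel {a..<b} y" by (rule sint_abs_of_sq[OF assms(2,4)])
  have iKy: "set_integrable lborel {a..<b} (\<lambda>t. K * \<bar>y t\<bar>)"
    using set_integrable_abs[OF iy] by auto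
  have iky: "set_integrable lborel {a..<b} (\<lambda>t. k t * y t)"
    apply (rule set_integrable_bound[OF iKy])
    using assms(2,3) apply (simp add: set_borel_measurable_def)
    apply (intro AE_I2 impI)
    using assms(5) K0 by (simp add: abs_mult mult_right_mono)
  have "\<bar>LINT t:{a..<b}|lborel. k t * y t\<bar> \<le> (LINT t:{a..<b}|lborel. K * \<bar>y t\<bar>)"
    using iky iKy unfolding set_lebesgue_integral_def set_integrable_def
    apply (intro integral_abs_bound_integral)
      apply simp_all
    using assms(5) K0 by (auto simp: indicator_def abs_mult mult_right_mono)
  also have "\<dots> = K * (LINT t:{a..<b}|lborel. \<bar>y t\<bar>)" by simp
  finally have 1: "\<bar>LINT t:{a..<b}|lborel. k t * y t\<bar> \<le> K * (LINT t:{a..<b}|lborel. \<bar>y t\<bar>)" .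
  have "(LINT t:{a..<b}|lborel. k t * y t)^2 \<le> (K * (LINT t:{a..<b}|lborel. \<bar>y t\<bar>))^2"
    using 1 by (metis abs_ge_zero power2_abs power_mono)
  also have "\<dots> = K^2 * (LINT t:{a..<b}|lborel. \<bar>y t\<bar>)^2" by (simp add: power_mult_distrib)
  also have "\<dots> \<le> K^2 * ((b-a) * (LINT t:{a..<b}|lborel. (y t)^2))"
    by (rule mult_left_mono[OF mean_sq[OF assms(1,2,4)]]) simp
  finally show ?thesis by (simp add: mult.assoc)
qed

definition Cl :: "nat \<Rightarrow> nat \<Rightarrow> real set" where
  "Cl m k = {real k / real m ..< (real k + 1) / real m}"

lemma cell_Cl:
  assumes "m > 0" "k < m" "s \<in> Cl m k"
  shows "cell m s = Cl m k" "s \<in> {0..<1}"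
proof -
  have m: "real m > 0" using assms by simp
  have "real k \<le> real m * s" "real m * s < real k + 1"
    using assms(3) m by (auto simp: Cl_def field_simps)
  then have "\<lfloor>real m * s\<rfloor> = int k" by (simp add: floor_eq_iff)
  then show "cell m s = Cl m k" by (simp add: cell_def Cl_def Let_def)
  have "real k + 1 \<le> real m" using assms(2) by linarith
  then have a: "0 \<le> real m * s" and b: "real m * s < real m * 1"
    using \<open>real k \<le> real m * s\<close> \<open>real m * s < real k + 1\<close> by linarith+
  from a m have "0 \<le> s" by (simp add: zero_le_mult_iff)
  moreover from b m have "s < 1" by (simp only: mult_less_cancel_left_pos)
  ultimately show "s \<in> {0..<1}" by simp
qed

lemma cell_ex:
  assumes "m > 0" "s \<in> {0..<1::real}"
  shows "\<exists>k<m. s \<in> Cl m k"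
proof -
  have m: "real m > 0" using assms by simp
  define k where "k = nat \<lfloor>real m * s\<rfloor>"
  have f0: "0 \<le> \<lfloor>real m * s\<rfloor>" using assms m by simp
  have "real m * s < real m" using assms m by simp
  then have "\<lfloor>real m * s\<rfloor> < int m" by (simp add: floor_less_iff)
  then have km: "k < m" using f0 by (simp add: k_def nat_less_iff)
  have "real k = of_int \<lfloor>real m * s\<rfloor>" using f0 by (simp add: k_def)
  then have l: "real k \<le> real m * s" and u: "real m * s < real k + 1"
    using of_int_floor_le[of "real m * s"] real_of_int_floor_add_one_gt[of "real m * s"] by linarith+
  have "real k / real m \<le> s" using l m by (simp add: pos_divide_le_eq mult.commute)
  moreover have "s < (real k + 1) / real m" using u m by (simp add: pos_less_divide_eq mult.commute)
  ultimately have "s \<in> Cl m k" by (simp add: Cl_def)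
  then show ?thesis using km by blast
qed

lemma ivl_un: "a \<le> b \<Longrightarrow> b \<le> c \<Longrightarrow> {a..<b} \<union> {b..<c} = {a..<(c::real)}"
  by auto

lemma Cl_step: "m > 0 \<Longrightarrow> {0..<real n / real m} \<union> Cl m n = {0..<(real n + 1) / real m}"
  "m > 0 \<Longrightarrow> {0..<real n / real m} \<inter> Cl m n = {}"
  unfolding Cl_def
   apply (rule ivl_un, simp, simp add: divide_right_mono)
  by auto

lemma cell_sum_gen:
  fixes f :: "real \<Rightarrow> real"
  assumes "m > 0" "\<And>k. k < m \<Longrightarrow> set_integrable lborel (Cl m k) f" "n \<le> m"
  shows "set_integrable lborel {0..<real n / real m} f \<and>
         (\<Sum>k<n. LINT t:Cl m k|lborel. f t) = (LINT t:{0..<real n / real m}|lborel. f t)"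
  using assms(3)
proof (induction n)
  case 0 then show ?case by (simp add: set_lebesgue_integral_def)
next
  case (Suc n)
  then have IH: "set_integrable lborel {0..<real n / real m} f"
     "(\<Sum>k<n. LINT t:Cl m k|lborel. f t) = (LINT t:{0..<real n / real m}|lborel. f t)" by auto
  have c: "set_integrable lborel (Cl m n) f" using assms(2) Suc by simp
  have s: "Cl m n \<in> sets lborel" by (simp add: Cl_def)
  have U: "{0..<real (Suc n)/real m} = {0..<real n/real m} \<union> Cl m n"
    using Cl_step(1)[OF assms(1), of n] by (simp add: add.commute)
  have i: "set_integrable lborel ({0..<real n/real m} \<union> Cl m n) f"
    by (rule set_integrable_Un[OF IH(1) c _ s]) simp
  have eq: "(LINT t:{0..<real n/real m} \<union> Cl m n|lborel. f t) =
     (LINT t:{0..<real n/real m}|lborel. f t) + (LINT t:Cl m n|lborel. f t)"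
    by (rule set_integral_Un[OF Cl_step(2)[OF assms(1)] IH(1) c])
  show ?case unfolding U using i eq IH(2) by simp
qed

lemma cell_sum:
  fixes f :: "real \<Rightarrow> real"
  assumes "m > 0" "\<And>k. k < m \<Longrightarrow> set_integrable lborel (Cl m k) f"
  shows "set_integrable lborel {0..<1} f \<and>
         (\<Sum>k<m. LINT t:Cl m k|lborel. f t) = (LINT t:{0..<1}|lborel. f t)"
  using cell_sum_gen[OF assms, of m] assms(1) by simp

lemma Icc_Ico:
  fixes f :: "real \<Rightarrow> real"
  assumes "set_integrable lborel {0..1} f"
  shows "(LINT t:{0..1}|lborel. f t) = (LINT t:{0..<1}|lborel. f t)"
proof -
  have a: "set_integrable lborel {0..<1} f" by (rule set_integrable_subset[OF assms]) auto
  have b: "set_integrable lborel {1} f" by (rule set_integrable_subset[OF assms]) auto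
  have "(LINT t:{1}|lborel. f t) = (LINT t::real:{1}|lborel. f 1)"
    by (rule set_lebesgue_integral_cong) auto
  also have "\<dots> = 0" by (subst set_integral_const) auto
  finally have z: "(LINT t:{1}|lborel. f t) = 0" .
  have "{0..1::real} = {0..<1} \<union> {1}" by auto
  then show ?thesis using set_integral_Un[OF _ a b] z by simp
qed

lemma exp2: fixes \<sigma> u :: real shows "exp (-2*\<sigma>*u) = exp (- \<sigma> * u) * exp (- \<sigma> * u)"
  by (simp add: exp_add[symmetric])

lemma L2_int:
  assumes "L2_01 x" "\<sigma> \<ge> 0"
  shows "set_integrable lborel {0..1} (\<lambda>t. exp (-2*\<sigma>*t) * x t * x t)"
proof -
  have xm: "x \<in> borel_measurable lborel" and x2: "set_integrable lborel {0..1} (\<lambda>t. (x t)\<^sup>2)"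
    using assms(1) by (auto simp: L2_01_def)
  show ?thesis
    apply (rule set_integrable_bound[OF x2])
    using xm apply (simp add: set_borel_measurable_def)
    apply (intro AE_I2 impI)
  proof -
    fix t assume "t \<in> {0..1::real}"
    then have "exp (-2*\<sigma>*t) \<le> 1" using assms(2) by simp
    then have "exp (-2*\<sigma>*t) * (\<bar>x t\<bar> * \<bar>x t\<bar>) \<le> \<bar>x t\<bar> * \<bar>x t\<bar>"
      by (intro mult_left_le_one_le) auto
    then show "norm (exp (-2*\<sigma>*t) * x t * x t) \<le> norm ((x t)\<^sup>2)"
      by (simp add: abs_mult power2_eq_square mult.assoc)
  qed
qed

lemma main_bound:
  fixes x A :: "real \<Rightarrow> real"
  assumes "\<sigma> \<ge> 0" "m > 0" "L2_01 x" "K \<ge> 0"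
   "\<And>s. s \<in> {0..<1} \<Longrightarrow> (exp(- \<sigma> * s) * A s)^2 \<le> real m * K^2 * (LINT t:cell m s|lborel. exp(-2*\<sigma>*t) * x t * x t)"
   "A 1 = 0"
  shows "inner_sigma \<sigma> A A \<le> K^2 * inner_sigma \<sigma> x x"
proof -
  define F where "F t = exp(-2*\<sigma>*t) * x t * x t" for t
  have iF: "set_integrable lborel {0..1} F" unfolding F_def by (rule L2_int[OF assms(3,1)])
  have Fe: "F = (\<lambda>t. exp(-2*\<sigma>*t) * x t * x t)" by (simp add: F_def fun_eq_iff)
  have F0: "F t \<ge> 0" for t by (simp add: F_def mult.assoc)
  have Clsub: "k < m \<Longrightarrow> Cl m k \<subseteq> {0..1}" for k
    using cell_Cl(2)[OF assms(2)] by fastforce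
  have iFk: "set_integrable lborel (Cl m k) F" if "k < m" for k
  proof (rule set_integrable_subset[OF iF])
    show "Cl m k \<in> sets lborel" by (simp add: Cl_def)
    show "Cl m k \<subseteq> {0..1}" using cell_Cl(2)[OF assms(2) that] by fastforce
  qed
  define c where "c k = (LINT t:Cl m k|lborel. F t)" for k
  define g where "g s = (if s \<in> {0..<1} then real m * K^2 * (LINT t:cell m s|lborel. F t) else 0)" for s
  have gCl: "k < m \<Longrightarrow> s \<in> Cl m k \<Longrightarrow> g s = real m * K^2 * c k" for k s
    using cell_Cl[OF assms(2)] by (simp add: g_def c_def)
  have g0: "g s \<ge> 0" for s
    unfolding g_def set_lebesgue_integral_def using F0 assms(4)
    by (auto intro!: mult_nonneg_nonneg Bochner_Integration.integral_nonneg)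
  have igk: "set_integrable lborel (Cl m k) g" and Igk: "(LINT t:Cl m k|lborel. g t) = K^2 * c k"
    if k: "k < m" for k
  proof -
    have e: "\<And>s. indicator (Cl m k) s *\<^sub>R g s = indicator (Cl m k) s *\<^sub>R (real m * K^2 * c k)"
      using gCl[OF k] by (simp add: indicator_def)
    show "set_integrable lborel (Cl m k) g"
      unfolding set_integrable_def e using sint_const unfolding Cl_def set_integrable_def by blast
    have "(LINT t:Cl m k|lborel. g t) = (LINT t:Cl m k|lborel. real m * K^2 * c k)"
      unfolding set_lebesgue_integral_def e ..
    also have "\<dots> = K^2 * c k" using assms(2) by (simp add: set_integral_const Cl_def field_simps)
    finally show "(LINT t:Cl m k|lborel. g t) = K^2 * c k" .
  qed
  from cell_sum[OF assms(2) igk] have ig: "set_integrable lborel {0..<1} g"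
    and sg: "(\<Sum>k<m. K^2 * c k) = (LINT t:{0..<1}|lborel. g t)" by (auto simp: Igk)
  from cell_sum[OF assms(2) iFk] have sF: "(\<Sum>k<m. c k) = (LINT t:{0..<1}|lborel. F t)"
    by (simp add: c_def)
  have ix: "inner_sigma \<sigma> x x = (LINT t:{0..<1}|lborel. F t)"
    unfolding inner_sigma_def F_def[symmetric] by (rule Icc_Ico[OF iF])
  have eg: "\<And>s. indicator {0..1} s *\<^sub>R g s = indicator {0..<1} s *\<^sub>R g s"
    by (simp add: indicator_def g_def)
  have "inner_sigma \<sigma> A A \<le> (LINT t:{0..1}|lborel. g t)"
    unfolding inner_sigma_def set_lebesgue_integral_def
  proof (rule integral_mono')
    show "integrable lborel (\<lambda>s. indicator {0..1} s *\<^sub>R g s)"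
      unfolding eg using ig by (simp add: set_integrable_def)
    show "0 \<le> indicator {0..1} s *\<^sub>R g s" for s using g0 by (simp add: indicator_def)
    show "indicator {0..1} s *\<^sub>R (exp (-2 * \<sigma> * s) * A s * A s) \<le> indicator {0..1} s *\<^sub>R g s" for s
    proof (cases "s \<in> {0..<1}")
      case True
      have "exp (-2 * \<sigma> * s) * A s * A s = (exp(- \<sigma> * s) * A s)^2"
        by (subst exp2) (simp add: power2_eq_square mult_ac)
      also have "\<dots> \<le> g s" using assms(5)[OF True] True by (simp add: g_def Fe)
      finally show ?thesis using True by (simp add: indicator_def)
    next
      case False
      then have "s \<notin> {0..1} \<or> s = 1" by auto
      then show ?thesis using assms(6) g0 by (auto simp: indicator_def)
    qed
  qed
  also have "\<dots> = (LINT t:{0..<1}|lborel. g t)"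
    unfolding set_lebesgue_integral_def eg ..
  also have "\<dots> = K^2 * inner_sigma \<sigma> x x"
  proof -
    have "(\<Sum>k<m. K^2 * c k) = K^2 * (\<Sum>k<m. c k)" by (simp add: sum_distrib_left)
    then show ?thesis using sg sF ix by simp
  qed
  finally show ?thesis .
qed


lemma cell_setup:
  assumes "m > 0" "s \<in> {0..<1::real}"
  obtains a where "cell m s = {a..<a + 1/real m}" "s \<in> {a..<a + 1/real m}" "{a..<a + 1/real m} \<subseteq> {0..1}"
proof -
  obtain k where k: "k < m" "s \<in> Cl m k" using cell_ex[OF assms] by blast
  have e: "Cl m k = {real k / real m..<real k / real m + 1/real m}"
    by (simp add: Cl_def add_divide_distrib)
  have "Cl m k \<subseteq> {0..1}" using cell_Cl(2)[OF assms(1) k(1)] by fastforce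
  then show ?thesis using that[of "real k / real m"] cell_Cl(1)[OF assms(1) k] k(2) e by simp
qed

lemma pw_gen:
  fixes x \<kappa> :: "real \<Rightarrow> real"
  assumes "\<sigma> \<ge> 0" "m > 0" "L2_01 x" "s \<in> {0..<1}" "\<kappa> \<in> borel_measurable lborel"
    "\<And>t. t \<in> cell m s \<Longrightarrow> \<bar>\<kappa> t\<bar> \<le> K"
    "exp (- \<sigma> * s) * V = real m * (LINT t:cell m s|lborel. \<kappa> t * (exp (- \<sigma> * t) * x t))"
  shows "(exp (- \<sigma> * s) * V)^2 \<le> real m * K^2 * (LINT t:cell m s|lborel. exp(-2*\<sigma>*t) * x t * x t)"
proof -
  obtain a where a: "cell m s = {a..<a + 1/real m}" "s \<in> {a..<a + 1/real m}" "{a..<a + 1/real m} \<subseteq> {0..1}"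
    using cell_setup[OF assms(2,4)] by blast
  have xm: "x \<in> borel_measurable lborel" using assms(3) by (simp add: L2_01_def)
  define y where "y t = exp (- \<sigma> * t) * x t" for t
  have ym: "y \<in> borel_measurable lborel" unfolding y_def using xm by measurable
  have y2: "(y t)^2 = exp(-2*\<sigma>*t) * x t * x t" for t
    unfolding y_def by (subst exp2) (simp add: power2_eq_square mult_ac)
  have iy2: "set_integrable lborel {a..<a + 1/real m} (\<lambda>t. (y t)^2)"
    unfolding y2 by (rule set_integrable_subset[OF L2_int[OF assms(3,1)]]) (use a(3) in auto)
  have "(exp (- \<sigma> * s) * V)^2 = (real m)^2 * (LINT t:cell m s|lborel. \<kappa> t * y t)^2"
    unfolding assms(7) y_def by (simp add: power_mult_distrib)
  also have "\<dots> \<le> (real m)^2 * (K^2 * (a + 1/real m - a) * (LINT t:{a..<a + 1/real m}|lborel. (y t)^2))"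
    unfolding a(1)
    by (rule mult_left_mono[OF cs_cell[OF _ ym assms(5) iy2]]) (use assms(6) a(1) in auto)
  also have "\<dots> = real m * K^2 * (LINT t:cell m s|lborel. exp(-2*\<sigma>*t) * x t * x t)"
    using assms(2) unfolding a(1) y2 by (simp add: power2_eq_square)
  finally show ?thesis .
qed


lemma kernel_exp_bound:
  assumes "\<sigma> \<ge> 0" "m > 0" "s \<in> {0..<1}" "t \<in> cell m s"
  shows "\<sigma>*(t-s) \<le> \<sigma>/real m" "\<sigma>*(s-t) \<le> \<sigma>/real m"
proof -
  obtain a where a: "cell m s = {a..<a + 1/real m}" "s \<in> {a..<a + 1/real m}" "{a..<a + 1/real m} \<subseteq> {0..1}"
    using cell_setup[OF assms(2,3)] by blast
  have t: "a \<le> t" "t < a + 1/real m" using a(1) assms(4) by simp_all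
  have s: "a \<le> s" "s < a + 1/real m" using a(2) by simp_all
  have d1: "t - s \<le> 1/real m" and d2: "s - t \<le> 1/real m" using t s by linarith+
  have "\<sigma>*(t-s) \<le> \<sigma>*(1/real m)" "\<sigma>*(s-t) \<le> \<sigma>*(1/real m)"
    by (rule mult_left_mono[OF d1 assms(1)], rule mult_left_mono[OF d2 assms(1)])
  then show "\<sigma>*(t-s) \<le> \<sigma>/real m" "\<sigma>*(s-t) \<le> \<sigma>/real m" by simp_all
qed

lemma exp_shift: "exp (\<sigma>*(t-s)) * (exp (- \<sigma> * t) * x) = exp (- \<sigma> * s) * (x::real)"
proof -
  have "exp (\<sigma>*(t-s)) * exp (- \<sigma> * t) = exp (\<sigma>*(t-s) + - \<sigma> * t)" by (rule exp_add[symmetric])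
  also have "\<sigma>*(t-s) + - \<sigma> * t = - \<sigma> * s" by (simp add: algebra_simps)
  finally show ?thesis by (simp add: mult.assoc[symmetric])
qed

lemma cell_sets:
  assumes "m > 0" "s \<in> {0..<1::real}" shows "cell m s \<in> sets lborel"
proof -
  obtain a where "cell m s = {a..<a + 1/real m}" "s \<in> {a..<a + 1/real m}" "{a..<a + 1/real m} \<subseteq> {0..1}"
    using cell_setup[OF assms] by blast
  then show ?thesis by simp
qed

lemma x_int_cell:
  assumes "m > 0" "s \<in> {0..<1}" "L2_01 x"
  shows "set_integrable lborel (cell m s) x"
proof -
  obtain a where a: "cell m s = {a..<a + 1/real m}" "s \<in> {a..<a + 1/real m}" "{a..<a + 1/real m} \<subseteq> {0..1}"
    using cell_setup[OF assms(1,2)] by blast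
  have xm: "x \<in> borel_measurable lborel" and x2: "set_integrable lborel {0..1} (\<lambda>t. (x t)\<^sup>2)"
    using assms(3) by (auto simp: L2_01_def)
  have "set_integrable lborel {a..<a + 1/real m} (\<lambda>t. (x t)\<^sup>2)"
    by (rule set_integrable_subset[OF x2]) (use a in auto)
  then show ?thesis unfolding a(1) by (rule sint_abs_of_sq[OF xm])
qed

lemma pw_Q:
  assumes "\<sigma> \<ge> 0" "m > 0" "L2_01 x" "s \<in> {0..<1}"
  shows "(exp (- \<sigma> * s) * Qm m x s)^2 \<le> real m * (exp (\<sigma>/real m))^2 * (LINT t:cell m s|lborel. exp(-2*\<sigma>*t) * x t * x t)"
proof (rule pw_gen[OF assms, where \<kappa>="\<lambda>t. exp (\<sigma>*(t-s))"])
  show "(\<lambda>t. exp (\<sigma>*(t-s))) \<in> borel_measurable lborel" by measurable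
  show "\<bar>exp (\<sigma>*(t-s))\<bar> \<le> exp (\<sigma>/real m)" if "t \<in> cell m s" for t
    using kernel_exp_bound(1)[OF assms(1,2,4) that] by simp
  have "(LINT t:cell m s|lborel. exp (\<sigma>*(t-s)) * (exp (- \<sigma> * t) * x t))
      = (LINT t:cell m s|lborel. exp (- \<sigma> * s) * x t)"
    by (rule set_lebesgue_integral_cong[OF cell_sets[OF assms(2,4)]]) (blast intro: exp_shift)
  moreover have q: "Qm m x s = real m * (LINT t:cell m s|lborel. x t)" using assms(4) by (simp add: Qm_def)
  ultimately show "exp (- \<sigma> * s) * Qm m x s = real m * (LINT t:cell m s|lborel. exp (\<sigma>*(t-s)) * (exp (- \<sigma> * t) * x t))"
    unfolding q by (simp only: set_integral_mult_right mult.left_commute)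
qed

lemma pw_D:
  assumes "\<sigma> \<ge> 0" "m > 0" "L2_01 x" "s \<in> {0..<1}"
  shows "(exp (- \<sigma> * s) * (Qm m x s - Qm_sigma \<sigma> m x s))^2 \<le> real m * (exp (\<sigma>/real m) - 1)^2 * (LINT t:cell m s|lborel. exp(-2*\<sigma>*t) * x t * x t)"
proof (rule pw_gen[OF assms, where \<kappa>="\<lambda>t. exp (\<sigma>*(t-s)) - 1"])
  show "(\<lambda>t. exp (\<sigma>*(t-s)) - 1) \<in> borel_measurable lborel" by measurable
  show "\<bar>exp (\<sigma>*(t-s)) - 1\<bar> \<le> exp (\<sigma>/real m) - 1" if "t \<in> cell m s" for t
  proof (cases "0 \<le> \<sigma>*(t-s)")
    case True
    then show ?thesis using kernel_exp_bound(1)[OF assms(1,2,4) that] by simp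
  next
    case False
    have "1 + \<sigma>*(t-s) \<le> exp (\<sigma>*(t-s))" by (rule exp_ge_add_one_self)
    moreover have "1 + \<sigma>*(s-t) \<le> exp (\<sigma>*(s-t))" by (rule exp_ge_add_one_self)
    moreover have "exp (\<sigma>*(s-t)) \<le> exp (\<sigma>/real m)" using kernel_exp_bound(2)[OF assms(1,2,4) that] by simp
    moreover have "exp (\<sigma>*(t-s)) \<le> 1" using False by simp
    ultimately have h: "1 + \<sigma>*(t-s) \<le> exp (\<sigma>*(t-s))" "1 + \<sigma>*(s-t) \<le> exp (\<sigma>/real m)"
      "exp (\<sigma>*(t-s)) \<le> 1" by linarith+
    have "\<sigma>*(s-t) = - (\<sigma>*(t-s))" by (simp add: algebra_simps)
    moreover have "\<bar>exp (\<sigma>*(t-s)) - 1\<bar> = 1 - exp (\<sigma>*(t-s))" using h(3) by simp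
    ultimately show ?thesis using h(1,2) by linarith
  qed
  have ix: "set_integrable lborel (cell m s) x" by (rule x_int_cell[OF assms(2,4,3)])
  have iy: "set_integrable lborel (cell m s) (\<lambda>t. exp (- \<sigma> * t) * x t)"
  proof -
    obtain a where a: "cell m s = {a..<a + 1/real m}" "s \<in> {a..<a + 1/real m}" "{a..<a + 1/real m} \<subseteq> {0..1}"
      using cell_setup[OF assms(2,4)] by blast
    have xm: "x \<in> borel_measurable lborel" using assms(3) by (simp add: L2_01_def)
    have cs: "cell m s \<in> sets lborel" by (rule cell_sets[OF assms(2,4)])
    have mm: "(\<lambda>t. exp (- \<sigma> * t) * x t) \<in> borel_measurable lborel" using xm by measurable
    show ?thesis
    proof (rule set_integrable_bound[OF ix])
      show "set_borel_measurable lborel (cell m s) (\<lambda>t. exp (- \<sigma> * t) * x t)"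
        unfolding set_borel_measurable_def
        by (intro borel_measurable_scaleR borel_measurable_indicator cs mm)
      show "AE t in lborel. t \<in> cell m s \<longrightarrow> norm (exp (- \<sigma> * t) * x t) \<le> norm (x t)"
      proof (intro AE_I2 impI)
        fix t assume "t \<in> cell m s"
        then have "t \<ge> 0" using a by auto
        then have "exp (- \<sigma> * t) \<le> 1" using assms(1) by simp
        then have "exp (- \<sigma> * t) * \<bar>x t\<bar> \<le> \<bar>x t\<bar>" by (intro mult_left_le_one_le) auto
        then show "norm (exp (- \<sigma> * t) * x t) \<le> norm (x t)" by (simp add: abs_mult)
      qed
    qed
  qed
  have "(LINT t:cell m s|lborel. (exp (\<sigma>*(t-s)) - 1) * (exp (- \<sigma> * t) * x t))
      = (LINT t:cell m s|lborel. exp (- \<sigma> * s) * x t - exp (- \<sigma> * t) * x t)"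
    by (rule set_lebesgue_integral_cong[OF cell_sets[OF assms(2,4)]])
      (intro allI impI, subst left_diff_distrib, simp only: exp_shift mult_1_left)
  also have "\<dots> = exp (- \<sigma> * s) * (LINT t:cell m s|lborel. x t) - (LINT t:cell m s|lborel. exp (- \<sigma> * t) * x t)"
    by (subst set_integral_diff(2)) (use ix iy in auto)
  finally have e: "(LINT t:cell m s|lborel. (exp (\<sigma>*(t-s)) - 1) * (exp (- \<sigma> * t) * x t)) =
     exp (- \<sigma> * s) * (LINT t:cell m s|lborel. x t) - (LINT t:cell m s|lborel. exp (- \<sigma> * t) * x t)" .
  have ee: "exp (- \<sigma> * s) * exp (\<sigma> * s) = 1" by (simp add: exp_minus field_simps)
  have alg: "E*(M*I1 - P*M*I2) = M*(E*I1 - I2)" if "E*P = 1" for E P M I1 I2 :: real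
  proof -
    have "E*(M*I1 - P*M*I2) = M*(E*I1) - (E*P)*M*I2" by (simp add: algebra_simps)
    then show ?thesis using that by (simp add: algebra_simps)
  qed
  have "exp (- \<sigma> * s) * (Qm m x s - Qm_sigma \<sigma> m x s) =
     exp (- \<sigma> * s) * (real m * (LINT t:cell m s|lborel. x t) - exp (\<sigma> * s) * real m * (LINT t:cell m s|lborel. exp (- \<sigma> * t) * x t))"
    using assms(4) by (simp only: Qm_def Qm_sigma_def if_True)
  also have "\<dots> = real m * (LINT t:cell m s|lborel. (exp (\<sigma>*(t-s)) - 1) * (exp (- \<sigma> * t) * x t))"
    unfolding e by (rule alg[OF ee])
  finally show "exp (- \<sigma> * s) * (Qm m x s - Qm_sigma \<sigma> m x s) = real m * (LINT t:cell m s|lborel. (exp (\<sigma>*(t-s)) - 1) * (exp (- \<sigma> * t) * x t))" .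
qed


lemma norm_bound:
  fixes A :: "real \<Rightarrow> real"
  assumes "\<sigma> \<ge> 0" "m > 0" "L2_01 x" "K \<ge> 0"
   "\<And>s. s \<in> {0..<1} \<Longrightarrow> (exp (- \<sigma> * s) * A s)^2 \<le> real m * K^2 * (LINT t:cell m s|lborel. exp(-2*\<sigma>*t) * x t * x t)"
   "A 1 = 0"
  shows "norm_sigma \<sigma> A \<le> K * norm_sigma \<sigma> x"
proof -
  have "inner_sigma \<sigma> A A \<le> K^2 * inner_sigma \<sigma> x x"
    by (rule main_bound[OF assms(1-4)]) (use assms(5,6) in auto)
  then have "sqrt (inner_sigma \<sigma> A A) \<le> sqrt (K^2 * inner_sigma \<sigma> x x)" by (rule real_sqrt_le_mono)
  also have "\<dots> = K * sqrt (inner_sigma \<sigma> x x)" using assms(4) by (simp add: real_sqrt_mult)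
  finally show ?thesis by (simp add: norm_sigma_def)
qed

lemma norm_nonneg: "norm_sigma \<sigma> x \<ge> 0"
proof -
  have "inner_sigma \<sigma> x x \<ge> 0"
    unfolding inner_sigma_def set_lebesgue_integral_def
    by (rule Bochner_Integration.integral_nonneg) (simp add: mult.assoc)
  then show ?thesis by (simp add: norm_sigma_def)
qed

lemma opnorm_le:
  assumes "\<And>x. L2_01 x \<Longrightarrow> norm_sigma \<sigma> (A x) \<le> K * norm_sigma \<sigma> x" "K \<le> B"
    "L2_01 x0" "norm_sigma \<sigma> x0 \<noteq> 0"
  shows "opnorm_sigma \<sigma> A \<le> B"
  unfolding opnorm_sigma_def
proof (rule cSup_least)
  show "{norm_sigma \<sigma> (A x) / norm_sigma \<sigma> x |x. L2_01 x \<and> norm_sigma \<sigma> x \<noteq> 0} \<noteq> {}"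
    using assms(3,4) by blast
  fix r assume "r \<in> {norm_sigma \<sigma> (A x) / norm_sigma \<sigma> x |x. L2_01 x \<and> norm_sigma \<sigma> x \<noteq> 0}"
  then obtain x where x: "r = norm_sigma \<sigma> (A x) / norm_sigma \<sigma> x" "L2_01 x" "norm_sigma \<sigma> x \<noteq> 0" by blast
  have p: "norm_sigma \<sigma> x > 0" using x(3) norm_nonneg[of \<sigma> x] by linarith
  have "norm_sigma \<sigma> (A x) \<le> K * norm_sigma \<sigma> x" by (rule assms(1)[OF x(2)])
  then have "r \<le> K" using p by (simp add: x(1) pos_divide_le_eq)
  then show "r \<le> B" using assms(2) by linarith
qed

lemma exists_x0:
  assumes "\<sigma> \<ge> 0"
  shows "L2_01 (\<lambda>t. exp (\<sigma> * t)) \<and> norm_sigma \<sigma> (\<lambda>t. exp (\<sigma> * t)) \<noteq> 0"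
proof
  show "L2_01 (\<lambda>t. exp (\<sigma> * t))"
    unfolding L2_01_def
  proof
    show "(\<lambda>t. exp (\<sigma> * t)) \<in> borel_measurable lborel" by measurable
    show "set_integrable lborel {0..1} (\<lambda>t. (exp (\<sigma> * t))\<^sup>2)"
      by (rule borel_integrable_atLeastAtMost') (intro continuous_intros)
  qed
  have "inner_sigma \<sigma> (\<lambda>t. exp (\<sigma> * t)) (\<lambda>t. exp (\<sigma> * t)) = (LINT t::real:{0..1}|lborel. (1::real))"
    unfolding inner_sigma_def
  proof (rule set_lebesgue_integral_cong)
    show "{0..1::real} \<in> sets lborel" by simp
    show "\<forall>t. t \<in> {0..1::real} \<longrightarrow> exp (-2*\<sigma>*t) * exp (\<sigma> * t) * exp (\<sigma> * t) = 1"
    proof (intro allI impI)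
      fix t :: real
      have "exp (-2*\<sigma>*t) * exp (\<sigma> * t) * exp (\<sigma> * t) = exp (-2*\<sigma>*t + \<sigma> * t + \<sigma> * t)"
        by (simp only: exp_add)
      also have "-2*\<sigma>*t + \<sigma> * t + \<sigma> * t = 0" by simp
      finally show "exp (-2*\<sigma>*t) * exp (\<sigma> * t) * exp (\<sigma> * t) = 1" by simp
    qed
  qed
  also have "\<dots> = 1" by (simp add: set_integral_const)
  finally show "norm_sigma \<sigma> (\<lambda>t. exp (\<sigma> * t)) \<noteq> 0" by (simp add: norm_sigma_def)
qed

theorem lemma3p1:
  fixes \<sigma> :: real and m :: nat
  assumes "\<sigma> > 0" and "real m \<ge> \<sigma>"
  shows "opnorm_sigma \<sigma> (\<lambda>x s. Qm m x s - Qm_sigma \<sigma> m x s) \<le> 2*\<sigma>/m \<and>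
         opnorm_sigma \<sigma> (Qm m) \<le> 1 + 2*\<sigma>/m"
proof -
  have s0: "\<sigma> \<ge> 0" using assms(1) by simp
  have m0: "m > 0" using assms by (cases m) auto
  define u where "u = \<sigma> / real m"
  have u0: "0 \<le> u" and u1: "u \<le> 1" using assms m0 by (auto simp: u_def divide_le_eq_1)
  have "exp u \<le> 1 + u + u^2" by (rule exp_bound[OF u0 u1])
  moreover have "u^2 \<le> u" using u0 u1 by (simp add: power2_eq_square mult_left_le_one_le)
  ultimately have eu: "exp u \<le> 1 + 2*\<sigma>/real m" by (simp add: u_def)
  have eu1: "1 \<le> exp u" using u0 by simp
  obtain x0 where x0: "L2_01 x0" "norm_sigma \<sigma> x0 \<noteq> 0" using exists_x0[OF s0] by blast
  have "opnorm_sigma \<sigma> (\<lambda>x s. Qm m x s - Qm_sigma \<sigma> m x s) \<le> 2*\<sigma>/m"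
  proof (rule opnorm_le[OF _ _ x0])
    show "norm_sigma \<sigma> (\<lambda>s. Qm m x s - Qm_sigma \<sigma> m x s) \<le> (exp u - 1) * norm_sigma \<sigma> x" if "L2_01 x" for x
      by (rule norm_bound[OF s0 m0 that]) (use eu1 pw_D[OF s0 m0 that] in \<open>auto simp: u_def Qm_def Qm_sigma_def\<close>)
    show "exp u - 1 \<le> 2*\<sigma>/real m" using eu by simp
  qed
  moreover have "opnorm_sigma \<sigma> (Qm m) \<le> 1 + 2*\<sigma>/m"
  proof (rule opnorm_le[OF _ eu x0])
    show "norm_sigma \<sigma> (Qm m x) \<le> exp u * norm_sigma \<sigma> x" if "L2_01 x" for x
      by (rule norm_bound[OF s0 m0 that]) (use pw_Q[OF s0 m0 that] in \<open>auto simp: u_def Qm_def\<close>)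
  qed
  ultimately show ?thesis by simp
qed

end
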